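(* Let $X$ solve $dX_t=\mu_X(X_t;\theta)\,dt+\sigma_X(X_t;\theta)\,dW_t$ on $\mathcal{X}=(x_l,x_r)$ and let $Y_t=V(X_t)$, with structure $\mathcal{S}=(\theta,V)$ ($\theta$ the data-generating parameter). Assume: (a) $\mu_X(\cdot;\theta)$ and $\sigma_X^2(\cdot;\theta)>0$ are twice continuously differentiable; (b) $S(x;\theta)\to-\infty$ as $x\to x_l$ and $S(x;\theta)\to+\infty$ as $x\to x_r$; (c) $\xi(\theta)^{-1}:=\int_{\mathcal{X}}\{\sigma_X^2(x;\theta)s(x;\theta)\}^{-1}dx<\infty$; (d) $V$ is strictly increasing and twice continuously differentiable with inverse $U=V^{-1}$; (e) the drift $\mu_Y$ and diffusion $\sigma_Y^2$ of $Y$ are nonparametrically identified from the discretely sampled process $\{Y_{i\Delta}\}$. With $f_X(x;\vartheta)=\frac{\xi(\vartheta)}{\sigma_X^2(x;\vartheta)s(x;\vartheta)}$, $F_X(x;\vartheta)=\int_{x_l}^x f_X(z;\vartheta)dz$, and $f_X'$ the derivative of $f_X$ in $x$, define for $\bar x\in(0,1)$ $$\mu_{\bar X}(\bar x;\vartheta)=\mu_X(F_X^{-1}(\bar x;\vartheta);\vartheta)f_X(F_X^{-1}(\bar x;\vartheta);\vartheta)+\frac12\sigma_X^2(F_X^{-1}(\bar x;\vartheta);\vartheta)f_X'(F_X^{-1}(\bar x;\vartheta);\vartheta),$$ $$\sigma_{\bar X}(\bar x;\vartheta)=\sigma_X(F_X^{-1}(\bar x;\vartheta);\vartheta)f_X(F_X^{-1}(\bar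 x;\vartheta);\vartheta).$$ Then $\mathcal{S}$ is identified if and only if the following holds: for all $\tilde\theta\in\Theta$, [$\mu_{\bar X}(\bar x;\theta)=\mu_{\bar X}(\bar x;\tilde\theta)$ and $\sigma_{\bar X}(\bar x;\theta)=\sigma_{\bar X}(\bar x;\tilde\theta)$ for all $\bar x\in(0,1)$] if and only if $\theta=\tilde\theta$.
   Context: Scale density and scale measure: $s(x;\theta)=\exp\{-\int_{x^*}^x \frac{2\mu_X(z;\theta)}{\sigma_X^2(z;\theta)}dz\}$, $S(x;\theta)=\int_{x^*}^x s(z;\theta)dz$ for fixed $x^*\in\mathcal{X}$; under (a)–(c), $f_X$ is the stationary density of $X$. For a structure $\mathcal{S}=(\theta,V)$ with $U=V^{-1}$, the drift and diffusion of $Y$ are $\mu_Y(y;\mathcal{S})=\frac{\mu_X(U(y);\theta)}{U'(y)}-\frac12\sigma_X^2(U(y);\theta)\frac{U''(y)}{U'(y)^3}$ and $\sigma_Y(y;\mathcal{S})=\frac{\sigma_X(U(y);\theta)}{U'(y)}$. Two structures are observationally equivalent ($\mathcal{S}\sim\tilde{\mathcal{S}}$) if they yield identical $\mu_Y(\cdot)$ and $\sigma_Y(\cdot)$ on the domain of $Y$. $\mathcal{S}$ is identified (within the model of admissible structures) if $\mathcal{S}\sim\tilde{\mathcal{S}}$ implies $\mathcal{S}=\tilde{\mathcal{S}}$. *)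

theory Defs
  imports "HOL-Analysis.Analysis"
begin

(* State space: an open interval I = (x_l, x_r) of the reals (endpoints may be infinite).
   Drift mu x th and diffusion coefficient sig x th of X; parameters th of type 'p. *)

definition C2_on :: "real set \<Rightarrow> (real \<Rightarrow> real) \<Rightarrow> bool" where
  "C2_on I f \<longleftrightarrow>
     (\<forall>x\<in>I. f field_differentiable (at x) \<and> deriv f field_differentiable (at x))
     \<and> continuous_on I (deriv (deriv f))"

(* filters "x \<rightarrow> x_l" and "x \<rightarrow> x_r" within I (work for finite and infinite endpoints) *)
definition left_end :: "real set \<Rightarrow> real filter" where
  "left_end I = (INF c\<in>I. principal {x\<in>I. x < c})"

definition right_end :: "real set \<Rightarrow> real filter" where
  "right_end I = (INF c\<in>I. principal {x\<in>I. c < x})"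

(* scale density s(x;th) with fixed reference point xs (oriented integral) *)
definition scale_dens :: "real \<Rightarrow> (real \<Rightarrow> 'p \<Rightarrow> real) \<Rightarrow> (real \<Rightarrow> 'p \<Rightarrow> real)
    \<Rightarrow> 'p \<Rightarrow> real \<Rightarrow> real" where
  "scale_dens xs mu sig th x =
     exp (- (LBINT z=xs..x. 2 * mu z th / (sig z th)\<^sup>2))"

definition scale_meas :: "real \<Rightarrow> (real \<Rightarrow> 'p \<Rightarrow> real) \<Rightarrow> (real \<Rightarrow> 'p \<Rightarrow> real)
    \<Rightarrow> 'p \<Rightarrow> real \<Rightarrow> real" where
  "scale_meas xs mu sig th x = (LBINT z=xs..x. scale_dens xs mu sig th z)"

definition xi :: "real set \<Rightarrow> real \<Rightarrow> (real \<Rightarrow> 'p \<Rightarrow> real) \<Rightarrow> (real \<Rightarrow> 'p \<Rightarrow> real)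
    \<Rightarrow> 'p \<Rightarrow> real" where
  "xi I xs mu sig th =
     1 / integral I (\<lambda>x. 1 / ((sig x th)\<^sup>2 * scale_dens xs mu sig th x))"

definition fX :: "real set \<Rightarrow> real \<Rightarrow> (real \<Rightarrow> 'p \<Rightarrow> real) \<Rightarrow> (real \<Rightarrow> 'p \<Rightarrow> real)
    \<Rightarrow> 'p \<Rightarrow> real \<Rightarrow> real" where
  "fX I xs mu sig th x = xi I xs mu sig th / ((sig x th)\<^sup>2 * scale_dens xs mu sig th x)"

definition FX :: "real set \<Rightarrow> real \<Rightarrow> (real \<Rightarrow> 'p \<Rightarrow> real) \<Rightarrow> (real \<Rightarrow> 'p \<Rightarrow> real)
    \<Rightarrow> 'p \<Rightarrow> real \<Rightarrow> real" where
  "FX I xs mu sig th x = integral {z\<in>I. z \<le> x} (fX I xs mu sig th)"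

(* drift and diffusion of Xbar = F_X(X), as functions of xbar in (0,1) *)
definition mu_bar :: "real set \<Rightarrow> real \<Rightarrow> (real \<Rightarrow> 'p \<Rightarrow> real) \<Rightarrow> (real \<Rightarrow> 'p \<Rightarrow> real)
    \<Rightarrow> 'p \<Rightarrow> real \<Rightarrow> real" where
  "mu_bar I xs mu sig th xb =
     (let x = inv_into I (FX I xs mu sig th) xb
      in mu x th * fX I xs mu sig th x
         + 1/2 * (sig x th)\<^sup>2 * deriv (fX I xs mu sig th) x)"

definition sig_bar :: "real set \<Rightarrow> real \<Rightarrow> (real \<Rightarrow> 'p \<Rightarrow> real) \<Rightarrow> (real \<Rightarrow> 'p \<Rightarrow> real)
    \<Rightarrow> 'p \<Rightarrow> real \<Rightarrow> real" where
  "sig_bar I xs mu sig th xb =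
     (let x = inv_into I (FX I xs mu sig th) xb
      in sig x th * fX I xs mu sig th x)"

(* drift and diffusion of Y = V(X) for structure (th, V), U = V^{-1} *)
definition mu_Y :: "real set \<Rightarrow> (real \<Rightarrow> 'p \<Rightarrow> real) \<Rightarrow> (real \<Rightarrow> 'p \<Rightarrow> real)
    \<Rightarrow> 'p \<times> (real \<Rightarrow> real) \<Rightarrow> real \<Rightarrow> real" where
  "mu_Y I mu sig S y =
     (let th = fst S; U = inv_into I (snd S)
      in mu (U y) th / deriv U y
         - 1/2 * (sig (U y) th)\<^sup>2 * deriv (deriv U) y / (deriv U y) ^ 3)"

definition sig_Y :: "real set \<Rightarrow> (real \<Rightarrow> 'p \<Rightarrow> real) \<Rightarrow> (real \<Rightarrow> 'p \<Rightarrow> real)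
    \<Rightarrow> 'p \<times> (real \<Rightarrow> real) \<Rightarrow> real \<Rightarrow> real" where
  "sig_Y I mu sig S y =
     (let th = fst S; U = inv_into I (snd S) in sig (U y) th / deriv U y)"

definition admissible_V :: "real set \<Rightarrow> (real \<Rightarrow> real) \<Rightarrow> bool" where
  "admissible_V I V \<longleftrightarrow> strict_mono_on I V \<and> C2_on I V \<and> (\<forall>x\<in>I. deriv V x \<noteq> 0)"

definition admissible :: "'p set \<Rightarrow> real set \<Rightarrow> 'p \<times> (real \<Rightarrow> real) \<Rightarrow> bool" where
  "admissible Theta I S \<longleftrightarrow> fst S \<in> Theta \<and> admissible_V I (snd S)"

definition obs_equiv :: "real set \<Rightarrow> (real \<Rightarrow> 'p \<Rightarrow> real) \<Rightarrow> (real \<Rightarrow> 'p \<Rightarrow> real)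
    \<Rightarrow> 'p \<times> (real \<Rightarrow> real) \<Rightarrow> 'p \<times> (real \<Rightarrow> real) \<Rightarrow> bool" where
  "obs_equiv I mu sig S S' \<longleftrightarrow>
     snd S ` I = snd S' ` I \<and>
     (\<forall>y \<in> snd S ` I. mu_Y I mu sig S y = mu_Y I mu sig S' y
                      \<and> sig_Y I mu sig S y = sig_Y I mu sig S' y)"

definition struct_eq :: "real set \<Rightarrow> 'p \<times> (real \<Rightarrow> real) \<Rightarrow> 'p \<times> (real \<Rightarrow> real) \<Rightarrow> bool" where
  "struct_eq I S S' \<longleftrightarrow> fst S = fst S' \<and> (\<forall>x\<in>I. snd S x = snd S' x)"

definition identified :: "'p set \<Rightarrow> real set \<Rightarrow> (real \<Rightarrow> 'p \<Rightarrow> real) \<Rightarrow> (real \<Rightarrow> 'p \<Rightarrow> real)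
    \<Rightarrow> 'p \<times> (real \<Rightarrow> real) \<Rightarrow> bool" where
  "identified Theta I mu sig S \<longleftrightarrow>
     (\<forall>S'. admissible Theta I S' \<and> obs_equiv I mu sig S S' \<longrightarrow> struct_eq I S S')"

end

theory Submission
  imports Defs "HOL-Complex_Analysis.Conformal_Mappings"
begin

definition c2 :: "real set \<Rightarrow> (real \<Rightarrow> real) \<Rightarrow> (real \<Rightarrow> real) \<Rightarrow> (real \<Rightarrow> real) \<Rightarrow> bool" where
  "c2 I f f1 f2 \<longleftrightarrow> (\<forall>x\<in>I. (f has_real_derivative f1 x) (at x) \<and> (f1 has_real_derivative f2 x) (at x))
     \<and> continuous_on I f2"

lemma c2_deriv:
  assumes "open I" "c2 I f f1 f2" "x \<in> I"
  shows "deriv f x = f1 x" "deriv (deriv f) x = f2 x"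
proof -
  have d: "\<And>z. z \<in> I \<Longrightarrow> deriv f z = f1 z" using assms by (auto simp: c2_def intro: DERIV_imp_deriv)
  then show "deriv f x = f1 x" using assms by auto
  have "(f1 has_real_derivative f2 x) (at x)" using assms by (auto simp: c2_def)
  then have "(deriv f has_real_derivative f2 x) (at x)"
    by (rule has_field_derivative_transform_within_open[OF _ assms(1,3)]) (simp add: d)
  then show "deriv (deriv f) x = f2 x" by (rule DERIV_imp_deriv)
qed

lemma c2_C2:
  assumes "open I" "c2 I f f1 f2"
  shows "C2_on I f"
proof -
  have c: "continuous_on I f2" using assms(2) by (simp add: c2_def)
  have "continuous_on I (deriv (deriv f))"
    by (rule continuous_on_cong[THEN iffD2, OF refl _ c]) (rule c2_deriv(2)[OF assms])
  moreover have "\<forall>x\<in>I. f field_differentiable (at x) \<and> deriv f field_differentiable (at x)"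
  proof
    fix x assume x: "x \<in> I"
    have d: "\<And>z. z \<in> I \<Longrightarrow> deriv f z = f1 z" using c2_deriv(1)[OF assms] by auto
    have "(f1 has_real_derivative f2 x) (at x)" using assms x by (auto simp: c2_def)
    then have "(deriv f has_real_derivative f2 x) (at x)"
      by (rule has_field_derivative_transform_within_open[OF _ assms(1) x]) (simp add: d)
    then show "f field_differentiable (at x) \<and> deriv f field_differentiable (at x)"
      using assms x by (auto simp: c2_def field_differentiable_def)
  qed
  ultimately show ?thesis by (simp add: C2_on_def)
qed

lemma C2_c2:
  assumes "open I" "C2_on I f"
  shows "c2 I f (deriv f) (deriv (deriv f))"
  using assms by (auto simp: c2_def C2_on_def DERIV_deriv_iff_field_differentiable)

lemma c2_cont1: "c2 I f f1 f2 \<Longrightarrow> continuous_on I f1"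
  by (auto simp: c2_def intro!: continuous_at_imp_continuous_on DERIV_isCont)

lemma c2_cont0: "c2 I f f1 f2 \<Longrightarrow> continuous_on I f"
  by (auto simp: c2_def intro!: continuous_at_imp_continuous_on DERIV_isCont)

lemma c2_comp:
  assumes f: "c2 J f f1 f2" and g: "c2 I g g1 g2" and gI: "g ` I \<subseteq> J" and J: "open J"
  shows "c2 I (f \<circ> g) (\<lambda>x. f1 (g x) * g1 x) (\<lambda>x. f2 (g x) * (g1 x)^2 + f1 (g x) * g2 x)"
  unfolding c2_def
proof (intro conjI ballI)
  fix x assume x: "x \<in> I"
  have gx: "g x \<in> J" using gI x by auto
  have fd: "(f has_real_derivative f1 (g x)) (at (g x))" "(f1 has_real_derivative f2 (g x)) (at (g x))"
    using f gx by (auto simp: c2_def)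
  have gd: "(g has_real_derivative g1 x) (at x)" "(g1 has_real_derivative g2 x) (at x)"
    using g x by (auto simp: c2_def)
  show "((f \<circ> g) has_real_derivative f1 (g x) * g1 x) (at x)"
    using DERIV_chain[OF fd(1) gd(1)] .
  have "((\<lambda>x. f1 (g x)) has_real_derivative f2 (g x) * g1 x) (at x)"
    using DERIV_chain2[OF fd(2) gd(1)] .
  from DERIV_mult[OF this gd(2)]
  show "((\<lambda>x. f1 (g x) * g1 x) has_real_derivative f2 (g x) * (g1 x)^2 + f1 (g x) * g2 x) (at x)"
    by (simp add: power2_eq_square algebra_simps)
next
  have cg: "continuous_on I g" "continuous_on I g1" "continuous_on I g2"
    using c2_cont0[OF g] c2_cont1[OF g] g unfolding c2_def by blast+
  have cf: "continuous_on J f1" "continuous_on J f2" using c2_cont1[OF f] f unfolding c2_def by blast+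
  have "continuous_on I (\<lambda>x. f1 (g x))" "continuous_on I (\<lambda>x. f2 (g x))"
    using continuous_on_compose2[OF cf(1) cg(1) gI] continuous_on_compose2[OF cf(2) cg(1) gI] by auto
  then show "continuous_on I (\<lambda>x. f2 (g x) * (g1 x)^2 + f1 (g x) * g2 x)"
    using cg by (intro continuous_intros) auto
qed

lemma c2_inv:
  assumes I: "open I" "is_interval I" and sm: "strict_mono_on I f" and f: "c2 I f f1 f2"
    and nz: "\<And>x. x \<in> I \<Longrightarrow> f1 x \<noteq> 0"
  shows "open (f ` I)" "is_interval (f ` I)"
    "c2 (f ` I) (inv_into I f) (\<lambda>y. 1 / f1 (inv_into I f y))
        (\<lambda>y. - f2 (inv_into I f y) * (1 / f1 (inv_into I f y)) / (f1 (inv_into I f y))^2)"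
    "strict_mono_on (f ` I) (inv_into I f)"
proof -
  define g where "g = inv_into I f"
  have cf: "continuous_on I f" using c2_cont0[OF f] .
  have inj: "inj_on f I" using strict_mono_on_imp_inj_on[OF sm] .
  have gf: "\<And>z. z \<in> I \<Longrightarrow> g (f z) = z" unfolding g_def using inv_into_f_f[OF inj] by blast
  show iv: "is_interval (f ` I)"
    using I(2) cf by (simp add: is_interval_connected_1 connected_continuous_image)
  show "open (f ` I)"
    unfolding open_dist
  proof (intro ballI)
    fix y assume "y \<in> f ` I"
    then obtain x where x: "x \<in> I" "y = f x" by auto
    obtain e where e: "e > 0" "ball x e \<subseteq> I" using I(1) x(1) open_contains_ball by blast
    define a where "a = x - e/2"
    define b where "b = x + e/2"
    have ab: "a \<in> I" "b \<in> I" "a < x" "x < b" using e by (auto simp: a_def b_def dist_real_def)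
    have fab: "f a < f x" "f x < f b" using sm ab x by (auto simp: strict_mono_on_def)
    define d where "d = min (f x - f a) (f b - f x)"
    have "d > 0" using fab by (simp add: d_def)
    moreover have "\<forall>z. dist z y < d \<longrightarrow> z \<in> f ` I"
    proof (intro allI impI)
      fix z assume "dist z y < d"
      then have "f a \<le> z" "z \<le> f b" using x by (auto simp: d_def dist_real_def)
      moreover have "f a \<in> f ` I" "f b \<in> f ` I" using ab by auto
      ultimately show "z \<in> f ` I" using iv unfolding is_interval_1 by blast
    qed
    ultimately show "\<exists>d>0. \<forall>z. dist z y < d \<longrightarrow> z \<in> f ` I" by blast
  qed
  then have oJ: "open (f ` I)" .
  have dg: "(g has_real_derivative 1 / f1 (g y)) (at y)" if yI: "y \<in> f ` I" for y
  proof -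
    obtain x where x: "x \<in> I" "y = f x" using yI by auto
    have "(f has_real_derivative f1 x) (at x)" using f x by (auto simp: c2_def)
    from has_field_derivative_inverse_strong[OF this nz[OF x(1)] I(1) x(1) cf gf]
    show ?thesis using x gf by (simp add: divide_inverse)
  qed
  have gI: "g ` (f ` I) \<subseteq> I" using gf by auto
  have cg: "continuous_on (f ` I) g"
    using dg by (intro continuous_at_imp_continuous_on ballI) (blast intro: DERIV_isCont)
  have dg1: "((\<lambda>y. 1 / f1 (g y)) has_real_derivative
     - f2 (g y) * (1 / f1 (g y)) / (f1 (g y))^2) (at y)" if y: "y \<in> f ` I" for y
  proof -
    have gy: "g y \<in> I" using gI y by auto
    have "(f1 has_real_derivative f2 (g y)) (at (g y))" using f gy by (auto simp: c2_def)
    from DERIV_chain2[OF this dg[OF y]]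
    have "((\<lambda>y. f1 (g y)) has_real_derivative f2 (g y) * (1 / f1 (g y))) (at y)" .
    from DERIV_inverse_fun[OF this nz[OF gy]]
    show ?thesis by (simp add: divide_inverse power2_eq_square)
  qed
  have cf1: "continuous_on I f1" "continuous_on I f2" using c2_cont1[OF f] f unfolding c2_def by blast+
  have "continuous_on (f ` I) (\<lambda>y. f1 (g y))" "continuous_on (f ` I) (\<lambda>y. f2 (g y))"
    using continuous_on_compose2[OF cf1(1) cg gI] continuous_on_compose2[OF cf1(2) cg gI] by auto
  then have "continuous_on (f ` I) (\<lambda>y. - f2 (g y) * (1 / f1 (g y)) / (f1 (g y))^2)"
    using gI nz by (intro continuous_intros) auto
  then show "c2 (f ` I) (inv_into I f) (\<lambda>y. 1 / f1 (inv_into I f y))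
        (\<lambda>y. - f2 (inv_into I f y) * (1 / f1 (inv_into I f y)) / (f1 (inv_into I f y))^2)"
    unfolding c2_def g_def[symmetric] using dg dg1 by blast
  show "strict_mono_on (f ` I) (inv_into I f)"
    unfolding strict_mono_on_def g_def[symmetric]
  proof (intro allI impI, elim conjE)
    fix r s assume rs: "r \<in> f ` I" "s \<in> f ` I" "r < s"
    then obtain x z where xz: "x \<in> I" "z \<in> I" "r = f x" "s = f z" by auto
    show "g r < g s"
    proof (rule ccontr)
      assume "\<not> g r < g s"
      then have "z \<le> x" using gf xz by auto
      then have "f z \<le> f x" using sm xz by (cases "z = x") (auto simp: strict_mono_on_def less_imp_le)
      then show False using rs xz by auto
    qed
  qed
qed


lemma interval_Icc_sub:
  fixes I :: "real set"
  assumes "is_interval I" "d \<in> I" "e \<in> I"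
  shows "{d..e} \<subseteq> I"
proof
  fix z assume "z \<in> {d..e}"
  then have "d \<le> z" "z \<le> e" by auto
  then show "z \<in> I" using assms unfolding is_interval_1 by blast
qed

lemma exists_box:
  fixes I :: "real set"
  assumes "open I" "is_interval I" "a \<in> I" "b \<in> I"
  shows "\<exists>d e. d < a \<and> d < b \<and> a < e \<and> b < e \<and> {d..e} \<subseteq> I"
proof -
  have m: "min a b \<in> I" "max a b \<in> I" using assms by (simp_all add: min_def max_def)
  obtain e1 where e1: "e1 > 0" "ball (min a b) e1 \<subseteq> I" using openE[OF assms(1) m(1)] by blast
  obtain e2 where e2: "e2 > 0" "ball (max a b) e2 \<subseteq> I" using openE[OF assms(1) m(2)] by blast
  define d where "d = min a b - e1/2"
  define e where "e = max a b + e2/2"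
  have "d \<in> ball (min a b) e1" using e1(1) by (simp add: d_def dist_real_def)
  then have dI: "d \<in> I" using e1(2) by blast
  have "e \<in> ball (max a b) e2" using e2(1) by (simp add: e_def dist_real_def)
  then have eI: "e \<in> I" using e2(2) by blast
  have "{d..e} \<subseteq> I" using interval_Icc_sub[OF assms(2) dI eI] .
  moreover have "d < a \<and> d < b \<and> a < e \<and> b < e" using e1 e2 by (auto simp: d_def e_def)
  ultimately show ?thesis by blast
qed

lemma integral_pos_Icc:
  fixes h :: "real \<Rightarrow> real"
  assumes "continuous_on {a..b} h" "a < b" "\<And>x. x \<in> {a..b} \<Longrightarrow> h x > 0"
  shows "integral {a..b} h > 0"
proof -
  obtain x0 where x0: "x0 \<in> {a..b}" "\<And>y. y \<in> {a..b} \<Longrightarrow> h x0 \<le> h y"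
    using continuous_attains_inf[of "{a..b}" h] assms by auto
  have "integral {a..b} (\<lambda>x. h x0) \<le> integral {a..b} h"
    using x0 assms by (intro integral_le integrable_continuous_interval) auto
  moreover have "integral {a..b} (\<lambda>x. h x0) = (b - a) * h x0" using assms by simp
  moreover have "(b - a) * h x0 > 0" using assms x0 by simp
  ultimately show ?thesis by linarith
qed

lemma left_seq:
  fixes I :: "real set"
  assumes "open I" "is_interval I" "I \<noteq> {}"
  shows "\<exists>x::nat \<Rightarrow> real. (\<forall>n. x n \<in> I) \<and> (\<forall>z\<in>I. eventually (\<lambda>n. x n < z) sequentially)"
proof -
  obtain x0 where x0: "x0 \<in> I" using assms by auto
  show ?thesis
  proof (cases "bdd_below I")
    case False
    define x where "x n = x0 - real n" for n
    have "x n \<in> I" for n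
    proof -
      obtain w where w: "w \<in> I" "\<not> x n \<le> w" using False unfolding bdd_below_def by blast
      have "x n \<le> x0" by (simp add: x_def)
      then have "x n \<in> {w..x0}" using w by auto
      then show ?thesis using interval_Icc_sub[OF assms(2) w(1) x0] by blast
    qed
    moreover have "eventually (\<lambda>n. x n < z) sequentially" for z
    proof -
      obtain N :: nat where "x0 - z < real N" using reals_Archimedean2 by blast
      then show ?thesis unfolding eventually_sequentially x_def
        by (intro exI[of _ N]) auto
    qed
    ultimately show ?thesis by blast
  next
    case True
    define a where "a = Inf I"
    have a_lt: "a < z" if zI: "z \<in> I" for z
    proof -
      obtain e where "e > 0" "ball z e \<subseteq> I" using openE[OF assms(1) zI] by blast
      moreover have "z - e/2 \<in> ball z e" using \<open>e > 0\<close> by (simp add: dist_real_def)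
      ultimately have "z - e/2 \<in> I" by blast
      then have "a \<le> z - e/2" unfolding a_def using True by (intro cInf_lower)
      then show ?thesis using \<open>e > 0\<close> by simp
    qed
    define x where "x n = a + (x0 - a) / (real n + 1)" for n
    have pos: "x0 - a > 0" using a_lt x0 by simp
    have "x n \<in> I" for n
    proof -
      have xa: "a < x n" using pos by (simp add: x_def)
      have "(x0 - a) / (real n + 1) \<le> (x0 - a)" using pos by (simp add: divide_le_eq)
      then have xle: "x n \<le> x0" by (simp add: x_def)
      have "\<exists>w\<in>I. w < x n" using xa unfolding a_def
        using cInf_less_iff[OF assms(3) True] by blast
      then obtain w where w: "w \<in> I" "w < x n" by blast
      then have "x n \<in> {w..x0}" using xle by auto
      then show ?thesis using interval_Icc_sub[OF assms(2) w(1) x0] by blast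
    qed
    moreover have "eventually (\<lambda>n. x n < z) sequentially" if z: "z \<in> I" for z
    proof -
      have za: "z - a > 0" using a_lt z by simp
      obtain N :: nat where N: "(x0 - a) / (z - a) < real N" using reals_Archimedean2 by blast
      show ?thesis unfolding eventually_sequentially
      proof (intro exI[of _ N] allI impI)
        fix n assume "N \<le> n"
        then have "(x0 - a) / (z - a) < real n + 1" using N by linarith
        then have "(x0 - a) < (z - a) * (real n + 1)" using za by (simp add: field_simps)
        then have "(x0 - a) / (real n + 1) < z - a" by (simp add: field_simps)
        then show "x n < z" by (simp add: x_def)
      qed
    qed
    ultimately show ?thesis by blast
  qed
qed

lemma right_seq:
  fixes I :: "real set"
  assumes "open I" "is_interval I" "I \<noteq> {}"
  shows "\<exists>x::nat \<Rightarrow> real. (\<forall>n. x n \<in> I) \<and> (\<forall>z\<in>I. eventually (\<lambda>n. z < x n) sequentially)"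
proof -
  have "open (uminus ` I)" using assms(1) by (simp add: open_negations)
  moreover have "is_interval (uminus ` I)" using assms(2) by (simp add: is_interval_neg_translationI)
  moreover have "uminus ` I \<noteq> {}" using assms(3) by simp
  ultimately obtain x :: "nat \<Rightarrow> real" where x: "\<forall>n. x n \<in> uminus ` I"
     "\<forall>z\<in>uminus ` I. eventually (\<lambda>n. x n < z) sequentially"
    using left_seq by blast
  have "\<forall>n. - x n \<in> I"
  proof
    fix n
    obtain w where "w \<in> I" "x n = - w" using x(1) by blast
    then show "- x n \<in> I" by simp
  qed
  moreover have "\<forall>z\<in>I. eventually (\<lambda>n. z < - x n) sequentially"
  proof
    fix z assume "z \<in> I"
    then have "- z \<in> uminus ` I" by simp
    with x(2) have "eventually (\<lambda>n. x n < - z) sequentially" by blast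
    then show "eventually (\<lambda>n. z < - x n) sequentially" by (rule eventually_mono) auto
  qed
  ultimately show ?thesis by (intro exI[of _ "\<lambda>n. - x n"]) simp
qed


locale onep =
  fixes I :: "real set" and xs :: real and mu sig :: "real \<Rightarrow> 'p \<Rightarrow> real" and th :: 'p
  assumes I_interval: "is_interval I" and I_open: "open I" and I_ne: "I \<noteq> {}"
    and xs_in: "xs \<in> I"
    and mu_c2: "C2_on I (\<lambda>x. mu x th)"
    and sig_c2: "C2_on I (\<lambda>x. (sig x th)\<^sup>2)"
    and pos: "\<And>x. x \<in> I \<Longrightarrow> (sig x th)\<^sup>2 > 0"
    and int: "(\<lambda>x. 1 / ((sig x th)\<^sup>2 * scale_dens xs mu sig th x)) integrable_on I"
begin

abbreviation "gg x \<equiv> 2 * mu x th / (sig x th)\<^sup>2"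
abbreviation "ss \<equiv> scale_dens xs mu sig th"
abbreviation "s2 x \<equiv> (sig x th)\<^sup>2"

lemma cont_at_of_C2: "C2_on I h \<Longrightarrow> x \<in> I \<Longrightarrow> isCont h x"
  unfolding C2_on_def by (meson field_differentiable_imp_continuous_at)

lemma cont_deriv_of_C2: "C2_on I h \<Longrightarrow> x \<in> I \<Longrightarrow> isCont (deriv h) x"
  unfolding C2_on_def by (meson field_differentiable_imp_continuous_at)

lemma gg_cont: "continuous_on I gg"
proof -
  have "isCont gg x" if xI: "x \<in> I" for x
  proof -
    have A: "isCont (\<lambda>x. 2 * mu x th) x" using cont_at_of_C2[OF mu_c2 xI] by simp
    show ?thesis using isCont_divide[OF A cont_at_of_C2[OF sig_c2 xI]] pos[OF xI] by simp
  qed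
  then show ?thesis by (intro continuous_at_imp_continuous_on) auto
qed

lemma ss_deriv:
  assumes x: "x \<in> I"
  shows "(ss has_real_derivative (- gg x * ss x)) (at x)"
proof -
  obtain d e where de: "d < xs" "d < x" "xs < e" "x < e" "{d..e} \<subseteq> I"
    using exists_box[OF I_open I_interval xs_in x] by blast
  have c: "continuous_on {d..e} gg" using continuous_on_subset[OF gg_cont de(5)] .
  have "((\<lambda>u. LBINT y=xs..u. gg y) has_vector_derivative gg x) (at x within {d..e})"
    using de by (intro interval_integral_FTC2[OF _ _ c]) auto
  then have "((\<lambda>u. LBINT y=xs..u. gg y) has_vector_derivative gg x) (at x within {d<..<e})"
    by (rule has_vector_derivative_within_subset) auto
  then have "((\<lambda>u. LBINT y=xs..u. gg y) has_vector_derivative gg x) (at x)"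
    using de at_within_open[of x "{d<..<e}"] by auto
  then have "((\<lambda>u. LBINT y=xs..u. gg y) has_real_derivative gg x) (at x)"
    by (simp add: has_real_derivative_iff_has_vector_derivative)
  from DERIV_chain2[OF DERIV_exp DERIV_minus[OF this]]
  show ?thesis unfolding scale_dens_def by (simp add: mult.commute)
qed

lemma ss_pos: "ss x > 0" by (simp add: scale_dens_def)

lemma ss_cont: "continuous_on I ss"
  using ss_deriv by (intro continuous_at_imp_continuous_on ballI) (blast intro: DERIV_isCont)


lemma h_cont: "continuous_on I (\<lambda>x. 1 / (s2 x * ss x))"
proof -
  have "isCont (\<lambda>x. 1 / (s2 x * ss x)) x" if xI: "x \<in> I" for x
  proof -
    have A: "isCont (\<lambda>x. s2 x * ss x) x"
      using isCont_mult[OF cont_at_of_C2[OF sig_c2 xI] DERIV_isCont[OF ss_deriv[OF xI]]] .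
    show ?thesis using isCont_divide[OF continuous_const A] pos[OF xI] ss_pos[of x] by simp
  qed
  then show ?thesis by (intro continuous_at_imp_continuous_on) auto
qed

lemma inv_int_pos: "integral I (\<lambda>x. 1 / (s2 x * ss x)) > 0"
proof -
  obtain d e where de: "d < xs" "xs < e" "{d..e} \<subseteq> I"
    using exists_box[OF I_open I_interval xs_in xs_in] by blast
  have c: "continuous_on {d..e} (\<lambda>x. 1 / (s2 x * ss x))" using continuous_on_subset[OF h_cont de(3)] .
  have p: "\<And>x. x \<in> I \<Longrightarrow> 1 / (s2 x * ss x) > 0" using pos ss_pos by simp
  have "integral {d..e} (\<lambda>x. 1 / (s2 x * ss x)) > 0"
    using de p by (intro integral_pos_Icc[OF c]) auto
  also have "integral {d..e} (\<lambda>x. 1 / (s2 x * ss x)) \<le> integral I (\<lambda>x. 1 / (s2 x * ss x))"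
    using de(3) int p by (intro integral_subset_le integrable_continuous_interval c) (auto simp: less_imp_le)
  finally show ?thesis .
qed

abbreviation "xx \<equiv> xi I xs mu sig th"
abbreviation "ff \<equiv> fX I xs mu sig th"
abbreviation "FF \<equiv> FX I xs mu sig th"

lemma xx_pos: "xx > 0" using inv_int_pos by (simp add: xi_def)

lemma ff_eq: "ff x = xx * (1 / (s2 x * ss x))" by (simp add: fX_def)

lemma ff_pos: "x \<in> I \<Longrightarrow> ff x > 0" using xx_pos pos ss_pos by (simp add: fX_def)

lemma ff_cont: "continuous_on I ff"
  unfolding ff_eq by (intro continuous_intros h_cont)

lemma ff_int: "ff integrable_on I"
  unfolding ff_eq using integrable_on_cmult_left[OF int, of xx] by simp

lemma ff_total: "integral I ff = 1"
proof -
  have "integral I ff = xx * integral I (\<lambda>x. 1 / (s2 x * ss x))"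
    unfolding ff_eq using integral_cmul[where c=xx and f="\<lambda>x. 1 / (s2 x * ss x)" and S=I] by simp
  then show ?thesis using inv_int_pos by (simp add: xi_def)
qed

abbreviation "ds2 \<equiv> deriv (\<lambda>x. (sig x th)\<^sup>2)"

definition Df :: "real \<Rightarrow> real" where
  "Df x = (0 * (s2 x * ss x) - xx * (ds2 x * ss x + (- gg x * ss x) * s2 x)) / (s2 x * ss x * (s2 x * ss x))"

lemma ff_deriv:
  assumes xI: "x \<in> I"
  shows "(ff has_real_derivative Df x) (at x)"
proof -
  have d1: "((\<lambda>x. s2 x) has_real_derivative ds2 x) (at x)"
    using sig_c2 xI unfolding C2_on_def by (simp add: DERIV_deriv_iff_field_differentiable)
  have d2: "((\<lambda>x. s2 x * ss x) has_real_derivative ds2 x * ss x + (- gg x * ss x) * s2 x) (at x)"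
    using DERIV_mult[OF d1 ss_deriv[OF xI]] .
  have "((\<lambda>x. xx / (s2 x * ss x)) has_real_derivative Df x) (at x)"
    unfolding Df_def using DERIV_divide[OF DERIV_const d2] pos[OF xI] ss_pos[of x] by simp
  moreover have "ff = (\<lambda>x. xx / (s2 x * ss x))" by (simp add: fX_def fun_eq_iff)
  ultimately show ?thesis by simp
qed

lemma iscont_aux:
  fixes a b c e :: "real \<Rightarrow> real"
  assumes "isCont a x" "isCont b x" "isCont c x" "isCont e x" "c x * b x \<noteq> 0"
  shows "isCont (\<lambda>x. (0 * (c x * b x) - k * (a x * b x + (- e x * b x) * c x)) / (c x * b x * (c x * b x))) x"
  using assms by (intro continuous_intros) auto

lemma Df_cont: "continuous_on I Df"
proof -
  have "isCont Df x" if xI: "x \<in> I" for x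
  proof -
    have g: "isCont gg x" using gg_cont I_open xI continuous_on_eq_continuous_at by blast
    show ?thesis unfolding Df_def
      by (rule iscont_aux[OF cont_deriv_of_C2[OF sig_c2 xI] DERIV_isCont[OF ss_deriv[OF xI]]
            cont_at_of_C2[OF sig_c2 xI] g]) (use pos[OF xI] ss_pos[of x] in simp)
  qed
  then show ?thesis by (intro continuous_at_imp_continuous_on) auto
qed


lemma I_leb: "I \<in> sets lebesgue"
  by (metis sets_completionI_sets borel_open lborelD I_open)

lemma phi_meas: "(\<lambda>z. indicator {..t} z * ff z) \<in> borel_measurable (lebesgue_on I)"
proof -
  have "ff \<in> borel_measurable (lebesgue_on I)"
    using continuous_imp_measurable_on_sets_lebesgue[OF ff_cont I_leb] .
  moreover have "((\<lambda>z. indicator {..t} z) :: real \<Rightarrow> real) \<in> borel_measurable (lebesgue_on I)"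
    by (intro measurable_restrict_space1) (simp add: borel_measurable_indicator)
  ultimately show ?thesis by (intro borel_measurable_times)
qed

lemma phi_int: "(\<lambda>z. indicator {..t} z * ff z) integrable_on I"
proof (rule measurable_bounded_by_integrable_imp_integrable[OF phi_meas ff_int _ I_leb])
  fix x assume "x \<in> I"
  then show "norm (indicator {..t} x * ff x) \<le> ff x" using ff_pos[of x] by (simp add: indicator_def)
qed

lemma phi_le: "x \<in> I \<Longrightarrow> indicator {..t} x * ff x \<le> ff x"
  using ff_pos[of x] by (simp add: indicator_def)

lemma phi_nonneg: "x \<in> I \<Longrightarrow> 0 \<le> indicator {..t} x * ff x"
  using ff_pos[of x] by (simp add: indicator_def)

lemma FF_phi: "FF t = integral I (\<lambda>z. indicator {..t} z * ff z)"
proof -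
  have "(\<lambda>z. indicator {..t} z * ff z) = (\<lambda>z. if z \<in> {..t} then ff z else 0)"
    by (simp add: fun_eq_iff indicator_def)
  then have "integral I (\<lambda>z. indicator {..t} z * ff z) = integral ({..t} \<inter> I) ff"
    using integral_restrict_Int[where S="{..t}" and f=ff and T=I] by simp
  moreover have "{..t} \<inter> I = {z \<in> I. z \<le> t}" by auto
  ultimately show ?thesis by (simp add: FX_def)
qed

lemma FF_diff:
  assumes "x \<in> I" "y \<in> I" "x \<le> y"
  shows "FF y = FF x + integral {x..y} ff"
proof -
  have sub: "{x..y} \<subseteq> I" using interval_Icc_sub[OF I_interval assms(1,2)] .
  have e: "(\<lambda>z. indicator {..y} z * ff z - indicator {..x} z * ff z) = (\<lambda>z. if z \<in> {x<..y} then ff z else 0)"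
    using assms by (auto simp: fun_eq_iff indicator_def)
  have "FF y - FF x = integral I (\<lambda>z. indicator {..y} z * ff z - indicator {..x} z * ff z)"
    unfolding FF_phi by (rule integral_diff[symmetric]) (rule phi_int)+
  also have "\<dots> = integral ({x<..y} \<inter> I) ff"
    unfolding e using integral_restrict_Int[where S="{x<..y}" and f=ff and T=I] by simp
  also have "{x<..y} \<inter> I = {x<..y}" using sub by auto
  also have "integral {x<..y} ff = integral {x..y} ff"
  proof (rule integral_spike_set)
    show "negligible {z \<in> {x<..y} - {x..y}. ff z \<noteq> 0}" by (rule negligible_subset[of "{}"]) auto
    show "negligible {z \<in> {x..y} - {x<..y}. ff z \<noteq> 0}" by (rule negligible_subset[of "{x}"]) auto
  qed
  finally show ?thesis by simp
qed

lemma FF_deriv: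
  assumes xI: "x \<in> I"
  shows "(FF has_real_derivative ff x) (at x)"
proof -
  obtain d e where de: "d < x" "x < e" "{d..e} \<subseteq> I"
    using exists_box[OF I_open I_interval xI xI] by blast
  have dI: "d \<in> I" using de by auto
  have c: "continuous_on {d..e} ff" using continuous_on_subset[OF ff_cont de(3)] .
  have "((\<lambda>u. integral {d..u} ff) has_real_derivative ff x) (at x within {d..e})"
    using de by (intro integral_has_real_derivative[OF c]) auto
  then have "((\<lambda>u. integral {d..u} ff) has_real_derivative ff x) (at x within {d<..<e})"
    by (rule has_field_derivative_subset) auto
  then have "((\<lambda>u. integral {d..u} ff) has_real_derivative ff x) (at x)"
    using de at_within_open[of x "{d<..<e}"] by auto
  then have "((\<lambda>u. FF d + integral {d..u} ff) has_real_derivative 0 + ff x) (at x)"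
    by (intro DERIV_add DERIV_const)
  then have "((\<lambda>u. FF d + integral {d..u} ff) has_real_derivative ff x) (at x)" by simp
  then show ?thesis
  proof (rule has_field_derivative_transform_within_open[of _ _ _ "{d<..<e}"])
    show "open {d<..<e}" by simp
    show "x \<in> {d<..<e}" using de by simp
    fix u assume "u \<in> {d<..<e}"
    then have "u \<in> I" "d \<le> u" using de by auto
    then show "FF d + integral {d..u} ff = FF u" using FF_diff[OF dI] by simp
  qed
qed

lemma FF_c2: "c2 I FF ff Df"
  unfolding c2_def using FF_deriv ff_deriv Df_cont by blast

lemma FF_cont: "continuous_on I FF"
  using c2_cont0[OF FF_c2] .

lemma FF_strict: "strict_mono_on I FF"
  unfolding strict_mono_on_def
proof (intro allI impI, elim conjE)
  fix x y assume xy: "x \<in> I" "y \<in> I" "x < y"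
  have sub: "{x..y} \<subseteq> I" using interval_Icc_sub[OF I_interval xy(1,2)] .
  have "integral {x..y} ff > 0"
    using xy sub ff_pos by (intro integral_pos_Icc continuous_on_subset[OF ff_cont sub]) auto
  then show "FF x < FF y" using FF_diff[OF xy(1,2)] xy(3) by simp
qed

lemma FF_nonneg: "FF t \<ge> 0"
  unfolding FF_phi by (rule integral_nonneg[OF phi_int]) (rule phi_nonneg)

lemma FF_le1: "FF t \<le> 1"
proof -
  have "integral I (\<lambda>z. indicator {..t} z * ff z) \<le> integral I ff"
    by (rule integral_le[OF phi_int ff_int]) (rule phi_le)
  then show ?thesis unfolding FF_phi ff_total .
qed

lemma FF_range: "FF ` I = {0<..<1}"
proof
  show "FF ` I \<subseteq> {0<..<1}"
  proof
    fix y assume "y \<in> FF ` I"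
    then obtain x where x: "x \<in> I" "y = FF x" by auto
    obtain d e where de: "d < x" "x < e" "{d..e} \<subseteq> I"
      using exists_box[OF I_open I_interval x(1) x(1)] by blast
    have "d \<in> I" "e \<in> I" using de by auto
    then have "FF d < FF x" "FF x < FF e" using FF_strict x de unfolding strict_mono_on_def by auto
    then show "y \<in> {0<..<1}" using FF_nonneg[of d] FF_le1[of e] x by auto
  qed
next
  show "{0<..<1} \<subseteq> FF ` I"
  proof
    fix y :: real assume y: "y \<in> {0<..<1}"
    obtain a :: "nat \<Rightarrow> real" where a: "\<forall>n. a n \<in> I" "\<forall>z\<in>I. eventually (\<lambda>n. a n < z) sequentially"
      using left_seq[OF I_open I_interval I_ne] by blast
    obtain b :: "nat \<Rightarrow> real" where b: "\<forall>n. b n \<in> I" "\<forall>z\<in>I. eventually (\<lambda>n. z < b n) sequentially"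
      using right_seq[OF I_open I_interval I_ne] by blast
    have "(\<lambda>k. integral I (\<lambda>z. indicator {..a k} z * ff z)) \<longlonglongrightarrow> integral I (\<lambda>z. 0)"
    proof (rule dominated_convergence(2)[OF phi_int ff_int])
      fix k z assume "z \<in> I"
      then show "norm (indicator {..a k} z * ff z) \<le> ff z" using ff_pos[of z] by (simp add: indicator_def)
    next
      fix z assume z: "z \<in> I"
      have "eventually (\<lambda>k. a k < z) sequentially" using a(2) z by blast
      then have "eventually (\<lambda>k. indicator {..a k} z * ff z = 0) sequentially"
        by (rule eventually_mono) (simp add: indicator_def)
      then show "(\<lambda>k. indicator {..a k} z * ff z) \<longlonglongrightarrow> 0" by (rule tendsto_eventually)
    qed
    then have la: "(\<lambda>k. FF (a k)) \<longlonglongrightarrow> 0" unfolding FF_phi by simp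
    have "(\<lambda>k. integral I (\<lambda>z. indicator {..b k} z * ff z)) \<longlonglongrightarrow> integral I ff"
    proof (rule dominated_convergence(2)[OF phi_int ff_int])
      fix k z assume "z \<in> I"
      then show "norm (indicator {..b k} z * ff z) \<le> ff z" using ff_pos[of z] by (simp add: indicator_def)
    next
      fix z assume z: "z \<in> I"
      have "eventually (\<lambda>k. z < b k) sequentially" using b(2) z by blast
      then have "eventually (\<lambda>k. indicator {..b k} z * ff z = ff z) sequentially"
        by (rule eventually_mono) (simp add: indicator_def)
      then show "(\<lambda>k. indicator {..b k} z * ff z) \<longlonglongrightarrow> ff z" by (rule tendsto_eventually)
    qed
    then have lb: "(\<lambda>k. FF (b k)) \<longlonglongrightarrow> 1" unfolding FF_phi ff_total by simp
    have "eventually (\<lambda>k. FF (a k) < y) sequentially" using order_tendstoD(2)[OF la] y by simp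
    then obtain k where k: "FF (a k) < y" by (meson eventually_sequentially order_refl)
    have "eventually (\<lambda>k. y < FF (b k)) sequentially" using order_tendstoD(1)[OF lb] y by simp
    then obtain m where m: "y < FF (b m)" by (meson eventually_sequentially order_refl)
    have ab: "a k < b m"
    proof (rule ccontr)
      assume "\<not> a k < b m"
      then have "FF (b m) \<le> FF (a k)" using FF_strict a(1) b(1)
        unfolding strict_mono_on_def by (cases "a k = b m") (auto simp: less_imp_le)
      then show False using k m by simp
    qed
    have sub: "{a k..b m} \<subseteq> I" using interval_Icc_sub[OF I_interval] a(1) b(1) by blast
    obtain x where x: "a k \<le> x" "x \<le> b m" "FF x = y"
      using IVT'[of FF "a k" y "b m"] k m ab continuous_on_subset[OF FF_cont sub] by auto
    then have "x \<in> I" using sub by auto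
    then show "y \<in> FF ` I" using x by auto
  qed
qed

end


locale onepV = onep +
  fixes V :: "real \<Rightarrow> real"
  assumes V_adm: "admissible_V I V"
begin

abbreviation "J \<equiv> V ` I"
abbreviation "U \<equiv> inv_into I V"
definition "U1 y = 1 / deriv V (U y)"
definition "U2 y = - deriv (deriv V) (U y) * (1 / deriv V (U y)) / (deriv V (U y))^2"
definition "G y = FF (U y)"
definition "fY y = ff (U y) * deriv U y"

lemma V_c2: "c2 I V (deriv V) (deriv (deriv V))"
  using C2_c2[OF I_open] V_adm by (simp add: admissible_V_def)

lemma V_sm: "strict_mono_on I V" using V_adm by (simp add: admissible_V_def)

lemma V_nz: "x \<in> I \<Longrightarrow> deriv V x \<noteq> 0" using V_adm by (simp add: admissible_V_def)

lemma J_open: "open J" and J_int: "is_interval J" and U_c2: "c2 J U U1 U2" and U_sm: "strict_mono_on J U"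
  using c2_inv[OF I_open I_interval V_sm V_c2 V_nz] unfolding U1_def[abs_def] U2_def[abs_def] by auto

lemma J_ne: "J \<noteq> {}" using I_ne by simp

lemma UJ: "y \<in> J \<Longrightarrow> U y \<in> I" by (rule inv_into_into)

lemma VU: "y \<in> J \<Longrightarrow> V (U y) = y" by (rule f_inv_into_f)

lemma UV: "x \<in> I \<Longrightarrow> U (V x) = x"
  using inv_into_f_f[OF strict_mono_on_imp_inj_on[OF V_sm]] by blast

lemma U1_nz: "y \<in> J \<Longrightarrow> U1 y \<noteq> 0" using V_nz[OF UJ] by (simp add: U1_def)

lemma dU: "y \<in> J \<Longrightarrow> deriv U y = U1 y" and ddU: "y \<in> J \<Longrightarrow> deriv (deriv U) y = U2 y"
  using c2_deriv[OF J_open U_c2] by auto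

lemma G_c2: "c2 J G (\<lambda>y. ff (U y) * U1 y) (\<lambda>y. Df (U y) * (U1 y)^2 + ff (U y) * U2 y)"
proof -
  have "U ` J \<subseteq> I" using UJ by auto
  from c2_comp[OF FF_c2 U_c2 this I_open] show ?thesis by (simp add: G_def[abs_def] o_def)
qed

lemma fY_eq: "y \<in> J \<Longrightarrow> fY y = ff (U y) * U1 y" by (simp add: fY_def dU)

lemma G_deriv: "y \<in> J \<Longrightarrow> (G has_real_derivative fY y) (at y)"
  using G_c2 fY_eq unfolding c2_def by auto

lemma fY_deriv: "y \<in> J \<Longrightarrow> (fY has_real_derivative (Df (U y) * (U1 y)^2 + ff (U y) * U2 y)) (at y)"
proof -
  assume y: "y \<in> J"
  have "((\<lambda>y. ff (U y) * U1 y) has_real_derivative (Df (U y) * (U1 y)^2 + ff (U y) * U2 y)) (at y)"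
    using G_c2 y unfolding c2_def by auto
  then show ?thesis
    by (rule has_field_derivative_transform_within_open[OF _ J_open y]) (simp add: fY_eq)
qed

lemma dfY: "y \<in> J \<Longrightarrow> deriv fY y = Df (U y) * (U1 y)^2 + ff (U y) * U2 y"
  using fY_deriv DERIV_imp_deriv by blast

lemma fY_nz: "y \<in> J \<Longrightarrow> fY y \<noteq> 0"
  using fY_eq ff_pos[OF UJ] U1_nz by force

lemma G_range: "G ` J = {0<..<1}"
proof -
  have "U ` J = I"
  proof
    show "U ` J \<subseteq> I" using UJ by auto
    show "I \<subseteq> U ` J"
    proof
      fix x assume x: "x \<in> I"
      show "x \<in> U ` J" by (rule image_eqI[of x U "V x"]) (use UV[OF x] x in auto)
    qed
  qed
  then have "G ` J = FF ` I" by (auto simp: G_def image_image[symmetric] simp del: image_image)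
  then show ?thesis using FF_range by simp
qed

lemma G_sm: "strict_mono_on J G"
  using U_sm FF_strict UJ unfolding strict_mono_on_def G_def by blast

lemma FF_inv: "x \<in> I \<Longrightarrow> inv_into I FF (FF x) = x"
  using inv_into_f_f[OF strict_mono_on_imp_inj_on[OF FF_strict]] by blast

abbreviation "muY \<equiv> mu_Y I mu sig (th, V)"
abbreviation "sigY \<equiv> sig_Y I mu sig (th, V)"

lemma sigY_eq: "y \<in> J \<Longrightarrow> sigY y = sig (U y) th / U1 y"
  by (simp add: sig_Y_def Let_def dU)

lemma muY_eq: "y \<in> J \<Longrightarrow> muY y = mu (U y) th / U1 y - 1/2 * (sig (U y) th)\<^sup>2 * U2 y / (U1 y)^3"
  by (simp add: mu_Y_def Let_def dU ddU)

lemma sigY_nz: "y \<in> J \<Longrightarrow> sigY y \<noteq> 0"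
  using sigY_eq pos[OF UJ] U1_nz by force

lemma sig_bar_G: "y \<in> J \<Longrightarrow> sig_bar I xs mu sig th (G y) = fY y * sigY y"
  using U1_nz[of y] by (simp add: sig_bar_def Let_def G_def FF_inv UJ fY_eq sigY_eq)

lemma mu_bar_G: "y \<in> J \<Longrightarrow> mu_bar I xs mu sig th (G y) = fY y * muY y + 1/2 * (sigY y)^2 * deriv fY y"
proof -
  assume y: "y \<in> J"
  have dff: "deriv ff (U y) = Df (U y)" using ff_deriv[OF UJ[OF y]] by (rule DERIV_imp_deriv)
  have "mu_bar I xs mu sig th (G y) = mu (U y) th * ff (U y) + 1/2 * (sig (U y) th)\<^sup>2 * Df (U y)"
    using y by (simp add: mu_bar_def Let_def G_def FF_inv UJ dff)
  also have "\<dots> = fY y * muY y + 1/2 * (sigY y)^2 * deriv fY y"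
    using U1_nz[OF y] by (simp add: fY_eq[OF y] muY_eq[OF y] sigY_eq[OF y] dfY[OF y] field_simps power2_eq_square power3_eq_cube)
  finally show ?thesis .
qed

definition "qY y = fY y * (sigY y)^2"

lemma sig_nz: "y \<in> J \<Longrightarrow> sig (U y) th \<noteq> 0"
  using pos[OF UJ[of y]] by auto

lemma qY_eq: "y \<in> J \<Longrightarrow> qY y = xx / (ss (U y) * U1 y)"
  using U1_nz[of y] sig_nz[of y] ss_pos[of "U y"]
  by (simp add: qY_def fY_eq sigY_eq ff_eq field_simps power2_eq_square)

lemma qY_nz: "y \<in> J \<Longrightarrow> qY y \<noteq> 0"
  using fY_nz sigY_nz by (simp add: qY_def)

lemma qY_deriv: "y \<in> J \<Longrightarrow> (qY has_real_derivative qY y * (2 * muY y / (sigY y)^2)) (at y)"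
proof -
  assume y: "y \<in> J"
  have u: "(U has_real_derivative U1 y) (at y)" "(U1 has_real_derivative U2 y) (at y)"
    using U_c2 y unfolding c2_def by auto
  have "((\<lambda>y. ss (U y)) has_real_derivative (- gg (U y) * ss (U y)) * U1 y) (at y)"
    using DERIV_chain2[OF ss_deriv[OF UJ[OF y]] u(1)] .
  from DERIV_mult[OF this u(2)]
  have "((\<lambda>y. ss (U y) * U1 y) has_real_derivative (- gg (U y) * ss (U y)) * U1 y * U1 y + U2 y * ss (U y)) (at y)" .
  from DERIV_divide[OF DERIV_const this, of xx]
  have d: "((\<lambda>y. xx / (ss (U y) * U1 y)) has_real_derivative
     (0 * (ss (U y) * U1 y) - xx * ((- gg (U y) * ss (U y)) * U1 y * U1 y + U2 y * ss (U y))) /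
       (ss (U y) * U1 y * (ss (U y) * U1 y))) (at y)"
    using U1_nz[OF y] ss_pos[of "U y"] by simp
  have e: "(0 * (ss (U y) * U1 y) - xx * ((- gg (U y) * ss (U y)) * U1 y * U1 y + U2 y * ss (U y))) /
       (ss (U y) * U1 y * (ss (U y) * U1 y)) = qY y * (2 * muY y / (sigY y)^2)"
    using U1_nz[OF y] ss_pos[of "U y"] sig_nz[OF y]
    by (simp add: qY_eq[OF y] muY_eq[OF y] sigY_eq[OF y] field_simps power2_eq_square power3_eq_cube)
  have "((\<lambda>y. xx / (ss (U y) * U1 y)) has_real_derivative qY y * (2 * muY y / (sigY y)^2)) (at y)"
    using d e by simp
  then show ?thesis
    by (rule has_field_derivative_transform_within_open[OF _ J_open y]) (simp add: qY_eq)
qed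

end


lemma G_equal:
  assumes A: "onepV I xs mu sig theta V" and B: "onepV I xs mu sig th' W"
    and oe: "obs_equiv I mu sig (theta, V) (th', W)"
  shows "\<forall>y\<in>V ` I. onepV.G I xs mu sig theta V y = onepV.G I xs mu sig th' W y
                 \<and> onepV.fY I xs mu sig theta V y = onepV.fY I xs mu sig th' W y"
proof -
  interpret A: onepV I xs mu sig theta V by fact
  interpret B: onepV I xs mu sig th' W by fact
  have JJ: "W ` I = V ` I" using oe by (simp add: obs_equiv_def)
  have eqY: "\<And>y. y \<in> V ` I \<Longrightarrow> A.muY y = B.muY y \<and> A.sigY y = B.sigY y"
    using oe unfolding obs_equiv_def snd_conv by blast
  define r where "r y = B.qY y / A.qY y" for y
  have r0: "(r has_real_derivative 0) (at y within V ` I)" if y: "y \<in> V ` I" for y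
  proof -
    have yB: "y \<in> W ` I" using y JJ by simp
    have d: "(r has_real_derivative
       (B.qY y * (2 * B.muY y / (B.sigY y)^2) * A.qY y - B.qY y * (A.qY y * (2 * A.muY y / (A.sigY y)^2)))
         / (A.qY y * A.qY y)) (at y)"
      unfolding r_def by (rule DERIV_divide[OF B.qY_deriv[OF yB] A.qY_deriv[OF y] A.qY_nz[OF y]])
    have "(B.qY y * (2 * B.muY y / (B.sigY y)^2) * A.qY y - B.qY y * (A.qY y * (2 * A.muY y / (A.sigY y)^2)))
         / (A.qY y * A.qY y) = 0" (is "?e = 0") using eqY[OF y] by simp
    from DERIV_cong[OF d this] show ?thesis by (rule has_field_derivative_at_within)
  qed
  obtain c where c: "\<forall>y\<in>V ` I. r y = c"
    using has_field_derivative_zero_constant[OF is_interval_convex[OF A.J_int] r0] by blast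
  have fYc: "B.fY y = c * A.fY y" if y: "y \<in> V ` I" for y
  proof -
    have yB: "y \<in> W ` I" using y JJ by simp
    have "B.qY y = c * A.qY y" using c y A.qY_nz[OF y] by (auto simp: r_def field_simps)
    then show ?thesis using eqY[OF y] A.sigY_nz[OF y] by (simp add: A.qY_def B.qY_def)
  qed
  have D0: "((\<lambda>y. B.G y - c * A.G y) has_real_derivative 0) (at y within V ` I)" if y: "y \<in> V ` I" for y
  proof -
    have yB: "y \<in> W ` I" using y JJ by simp
    have dd: "((\<lambda>y. B.G y - c * A.G y) has_real_derivative B.fY y - c * A.fY y) (at y)"
      using DERIV_diff[OF B.G_deriv[OF yB] DERIV_cmult[OF A.G_deriv[OF y], of c]] .
    have "B.fY y - c * A.fY y = 0" using fYc[OF y] by simp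
    from DERIV_cong[OF dd this] show ?thesis by (rule has_field_derivative_at_within)
  qed
  obtain d where d: "\<forall>y\<in>V ` I. B.G y - c * A.G y = d"
    using has_field_derivative_zero_constant[OF is_interval_convex[OF A.J_int] D0] by blast
  have Gcd: "B.G y = c * A.G y + d" if "y \<in> V ` I" for y using d that by force
  obtain y1 where y1: "y1 \<in> V ` I" using A.J_ne by blast
  obtain e where e: "e > 0" "ball y1 e \<subseteq> V ` I" using openE[OF A.J_open y1] by blast
  define y2 where "y2 = y1 + e/2"
  have "y2 \<in> ball y1 e" using e(1) by (simp add: y2_def dist_real_def)
  then have y2: "y2 \<in> V ` I" using e(2) by blast
  have "y1 < y2" using e(1) by (simp add: y2_def)
  then have "A.G y1 < A.G y2" "B.G y1 < B.G y2"
    using A.G_sm B.G_sm y1 y2 JJ unfolding strict_mono_on_def by auto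
  then have cpos: "c > 0" using Gcd[OF y1] Gcd[OF y2]
    by (smt (verit) mult_le_cancel_left)
  have AG: "\<And>y. y \<in> V ` I \<Longrightarrow> A.G y \<in> {0<..<1}" using A.G_range by blast
  have BG: "\<And>y. y \<in> V ` I \<Longrightarrow> B.G y \<in> {0<..<1}" using B.G_range JJ by blast
  have AGs: "\<And>t. t \<in> {0<..<1} \<Longrightarrow> \<exists>y\<in>V ` I. A.G y = t" using A.G_range by (metis imageE)
  have BGs: "\<And>t. t \<in> {0<..<1} \<Longrightarrow> \<exists>y\<in>V ` I. B.G y = t" using B.G_range JJ by (metis imageE)
  have d0: "d = 0"
  proof (rule ccontr)
    assume "d \<noteq> 0"
    then consider "d < 0" | "d > 0" by linarith
    then show False
    proof cases
      case 1
      define t where "t = min (1/2) (- d / (2 * c))"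
      have "d / (2 * c) < 0" using 1 cpos by (simp add: divide_neg_pos)
      then have t: "t \<in> {0<..<1}" by (auto simp: t_def)
      obtain y where y: "y \<in> V ` I" "A.G y = t" using AGs[OF t] by blast
      have "t \<le> - d / (2 * c)" by (simp add: t_def)
      then have "c * t \<le> c * (- d / (2 * c))" using cpos by (intro mult_left_mono) auto
      also have "c * (- d / (2 * c)) = - d / 2" using cpos by simp
      finally have "c * t \<le> - d / 2" .
      then have "B.G y < 0" using Gcd[OF y(1)] y(2) 1 by simp
      then show False using BG[OF y(1)] by simp
    next
      case 2
      define u where "u = min d 1 / 2"
      have u: "u \<in> {0<..<1}" using 2 by (auto simp: u_def)
      obtain y where y: "y \<in> V ` I" "B.G y = u" using BGs[OF u] by blast
      have "c * A.G y > 0" using cpos AG[OF y(1)] by simp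
      then have "u > d" using Gcd[OF y(1)] y(2) by simp
      then show False using 2 by (simp add: u_def)
    qed
  qed
  have c1: "c = 1"
  proof (rule ccontr)
    assume "c \<noteq> 1"
    then consider "c < 1" | "c > 1" by linarith
    then show False
    proof cases
      case 1
      have u: "c \<in> {0<..<1}" using 1 cpos by simp
      obtain y where y: "y \<in> V ` I" "B.G y = c" using BGs[OF u] by blast
      then have "A.G y = 1" using Gcd[OF y(1)] d0 cpos by simp
      then show False using AG[OF y(1)] by simp
    next
      case 2
      have t: "1 / c \<in> {0<..<1}" using 2 by simp
      obtain y where y: "y \<in> V ` I" "A.G y = 1 / c" using AGs[OF t] by blast
      then have "B.G y = 1" using Gcd[OF y(1)] d0 cpos by simp
      then show False using BG[OF y(1)] by simp
    qed
  qed
  show ?thesis using Gcd fYc d0 c1 by simp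
qed


lemma bars_from_obs:
  assumes A: "onepV I xs mu sig theta V" and B: "onepV I xs mu sig th' W"
    and oe: "obs_equiv I mu sig (theta, V) (th', W)"
  shows "\<forall>xb\<in>{0<..<1}. mu_bar I xs mu sig theta xb = mu_bar I xs mu sig th' xb
                     \<and> sig_bar I xs mu sig theta xb = sig_bar I xs mu sig th' xb"
proof
  interpret A: onepV I xs mu sig theta V by fact
  interpret B: onepV I xs mu sig th' W by fact
  have JJ: "W ` I = V ` I" using oe by (simp add: obs_equiv_def)
  have eqY: "\<And>y. y \<in> V ` I \<Longrightarrow> A.muY y = B.muY y \<and> A.sigY y = B.sigY y"
    using oe unfolding obs_equiv_def snd_conv by blast
  have GE: "\<forall>y\<in>V ` I. A.G y = B.G y \<and> A.fY y = B.fY y" using G_equal[OF A B oe] .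
  fix xb :: real assume xb: "xb \<in> {0<..<1}"
  obtain y where y: "y \<in> V ` I" "A.G y = xb" using A.G_range xb by (metis imageE)
  have yB: "y \<in> W ` I" using y JJ by simp
  have "eventually (\<lambda>z. z \<in> V ` I) (nhds y)" using eventually_nhds_in_open[OF A.J_open y(1)] .
  then have "eventually (\<lambda>z. A.fY z = B.fY z) (nhds y)" by (rule eventually_mono) (use GE in blast)
  then have dd: "deriv A.fY y = deriv B.fY y" by (rule deriv_cong_ev) simp
  have BGy: "B.G y = xb" using GE y by auto
  have f: "A.fY y = B.fY y" using GE y by auto
  show "mu_bar I xs mu sig theta xb = mu_bar I xs mu sig th' xb
                     \<and> sig_bar I xs mu sig theta xb = sig_bar I xs mu sig th' xb"
    using A.mu_bar_G[OF y(1)] B.mu_bar_G[OF yB] A.sig_bar_G[OF y(1)] B.sig_bar_G[OF yB]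
      y(2) BGy f dd eqY[OF y(1)] by simp
qed

lemma V_eq_from_obs:
  assumes A: "onepV I xs mu sig theta V" and B: "onepV I xs mu sig theta W"
    and oe: "obs_equiv I mu sig (theta, V) (theta, W)"
  shows "\<forall>x\<in>I. V x = W x"
proof
  interpret A: onepV I xs mu sig theta V by fact
  interpret B: onepV I xs mu sig theta W by fact
  have JJ: "W ` I = V ` I" using oe by (simp add: obs_equiv_def)
  have GE: "\<forall>y\<in>V ` I. A.G y = B.G y \<and> A.fY y = B.fY y" using G_equal[OF A B oe] .
  fix x assume x: "x \<in> I"
  define y where "y = V x"
  have y: "y \<in> V ` I" using x by (simp add: y_def)
  have yB: "y \<in> W ` I" using y JJ by simp
  have "A.G y = B.G y" using GE y by blast
  then have "A.FF (A.U y) = A.FF (B.U y)" by (simp add: A.G_def B.G_def)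
  then have "A.U y = B.U y"
    using inj_onD[OF strict_mono_on_imp_inj_on[OF A.FF_strict]] A.UJ[OF y] B.UJ[OF yB] by blast
  then have "B.U y = x" using A.UV[OF x] by (simp add: y_def)
  then have "W x = y" using B.VU[OF yB] by simp
  then show "V x = W x" by (simp add: y_def)
qed


lemma obs_from_bars:
  assumes A0: "onep I xs mu sig theta" and B0: "onep I xs mu sig th'" and V: "admissible_V I V"
    and bars: "\<forall>xb\<in>{0<..<1}. mu_bar I xs mu sig theta xb = mu_bar I xs mu sig th' xb
                     \<and> sig_bar I xs mu sig theta xb = sig_bar I xs mu sig th' xb"
  shows "\<exists>W. admissible_V I W \<and> obs_equiv I mu sig (theta, V) (th', W)"
proof -
  interpret A0: onep I xs mu sig theta by fact
  interpret B0: onep I xs mu sig th' by fact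
  define Fi where "Fi = inv_into I A0.FF"
  have nz: "\<And>x. x \<in> I \<Longrightarrow> A0.ff x \<noteq> 0" using A0.ff_pos by force
  note ci = c2_inv[OF A0.I_open A0.I_interval A0.FF_strict A0.FF_c2 nz]
  have Fi_c2: "c2 {0<..<1} Fi (\<lambda>y. 1 / A0.ff (Fi y))
        (\<lambda>y. - A0.Df (Fi y) * (1 / A0.ff (Fi y)) / (A0.ff (Fi y))^2)"
    using ci(3) unfolding A0.FF_range Fi_def .
  have Fi_sm: "strict_mono_on {0<..<1} Fi" using ci(4) unfolding A0.FF_range Fi_def .
  have Fi_I: "\<And>u. u \<in> {0<..<1} \<Longrightarrow> Fi u \<in> I"
    unfolding Fi_def using A0.FF_range by (metis inv_into_into)
  have FFi: "\<And>u. u \<in> {0<..<1} \<Longrightarrow> A0.FF (Fi u) = u"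
    unfolding Fi_def using A0.FF_range by (metis f_inv_into_f)
  have BFF: "\<And>x. x \<in> I \<Longrightarrow> B0.FF x \<in> {0<..<1}" using B0.FF_range by blast
  define Phi where "Phi = Fi \<circ> B0.FF"
  have Phi_c2: "c2 I Phi (\<lambda>x. 1 / A0.ff (Fi (B0.FF x)) * B0.ff x)
      (\<lambda>x. - A0.Df (Fi (B0.FF x)) * (1 / A0.ff (Fi (B0.FF x))) / (A0.ff (Fi (B0.FF x)))^2 * (B0.ff x)^2
           + 1 / A0.ff (Fi (B0.FF x)) * B0.Df x)"
    unfolding Phi_def using c2_comp[OF Fi_c2 B0.FF_c2 _ open_greaterThanLessThan] BFF by blast
  have Phi_I: "\<And>x. x \<in> I \<Longrightarrow> Phi x \<in> I" using Fi_I BFF by (simp add: Phi_def)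
  have Phi_onto: "\<And>x. x \<in> I \<Longrightarrow> \<exists>z\<in>I. Phi z = x"
  proof -
    fix x assume x: "x \<in> I"
    have "A0.FF x \<in> B0.FF ` I" using B0.FF_range A0.FF_range x by blast
    then obtain z where z: "z \<in> I" "B0.FF z = A0.FF x" by auto
    have "Phi z = Fi (A0.FF x)" by (simp add: Phi_def z)
    also have "\<dots> = x" unfolding Fi_def using inv_into_f_f[OF strict_mono_on_imp_inj_on[OF A0.FF_strict] x] .
    finally show "\<exists>z\<in>I. Phi z = x" using z by blast
  qed
  have Phi_sm: "strict_mono_on I Phi"
    using Fi_sm B0.FF_strict BFF unfolding strict_mono_on_def Phi_def by simp
  have V_c2: "c2 I V (deriv V) (deriv (deriv V))"
    using C2_c2[OF A0.I_open] V by (simp add: admissible_V_def)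
  define W where "W = V \<circ> Phi"
  have "\<exists>W2. c2 I W (\<lambda>x. deriv V (Phi x) * (1 / A0.ff (Fi (B0.FF x)) * B0.ff x)) W2"
    unfolding W_def using c2_comp[OF V_c2 Phi_c2 _ A0.I_open] Phi_I by blast
  then obtain W2 where W_c2: "c2 I W (\<lambda>x. deriv V (Phi x) * (1 / A0.ff (Fi (B0.FF x)) * B0.ff x)) W2"
    by blast
  have W_adm: "admissible_V I W"
    unfolding admissible_V_def
  proof (intro conjI ballI)
    show "strict_mono_on I W" using V Phi_sm Phi_I unfolding W_def admissible_V_def strict_mono_on_def by simp
    show "C2_on I W" using c2_C2[OF A0.I_open W_c2] .
    fix x assume x: "x \<in> I"
    have "deriv W x = deriv V (Phi x) * (1 / A0.ff (Fi (B0.FF x)) * B0.ff x)"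
      using c2_deriv(1)[OF A0.I_open W_c2 x] .
    moreover have "deriv V (Phi x) \<noteq> 0" using V Phi_I[OF x] by (simp add: admissible_V_def)
    moreover have "A0.ff (Fi (B0.FF x)) > 0" using A0.ff_pos[OF Fi_I[OF BFF[OF x]]] .
    moreover have "B0.ff x > 0" using B0.ff_pos[OF x] .
    ultimately show "deriv W x \<noteq> 0" by simp
  qed
  interpret A: onepV I xs mu sig theta V by (unfold_locales) (rule V)
  interpret B: onepV I xs mu sig th' W by (unfold_locales) (rule W_adm)
  have JJ: "W ` I = V ` I"
  proof
    show "W ` I \<subseteq> V ` I" using Phi_I by (auto simp: W_def)
    show "V ` I \<subseteq> W ` I"
    proof
      fix y assume "y \<in> V ` I"
      then obtain x where x: "x \<in> I" "y = V x" by auto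
      obtain z where z: "z \<in> I" "Phi z = x" using Phi_onto[OF x(1)] by blast
      show "y \<in> W ` I" by (rule image_eqI[of _ _ z]) (use x z in \<open>auto simp: W_def\<close>)
    qed
  qed
  have GG: "B.G y = A.G y" if y: "y \<in> V ` I" for y
  proof -
    define x where "x = A.U y"
    have x: "x \<in> I" using A.UJ[OF y] by (simp add: x_def)
    have "A0.FF x \<in> B0.FF ` I" using B0.FF_range A0.FF_range x by blast
    then obtain z where z: "z \<in> I" "B0.FF z = A0.FF x" by auto
    have "Phi z = x" unfolding Phi_def using z inv_into_f_f[OF strict_mono_on_imp_inj_on[OF A0.FF_strict] x]
      by (simp add: Fi_def)
    then have "W z = y" using A.VU[OF y] by (simp add: W_def x_def)
    then have "B.U y = z" using B.UV[OF z(1)] by simp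
    then show ?thesis using z by (simp add: A.G_def B.G_def x_def)
  qed
  have FY: "B.fY y = A.fY y" if y: "y \<in> V ` I" for y
  proof -
    have yB: "y \<in> W ` I" using y JJ by simp
    have "(B.G has_real_derivative A.fY y) (at y)"
      by (rule has_field_derivative_transform_within_open[OF A.G_deriv[OF y] A.J_open y]) (simp add: GG)
    then show ?thesis using B.G_deriv[OF yB] DERIV_unique by blast
  qed
  have "obs_equiv I mu sig (theta, V) (th', W)"
    unfolding obs_equiv_def snd_conv
  proof (intro conjI ballI)
    show "V ` I = W ` I" using JJ by simp
    fix y assume y: "y \<in> V ` I"
    have yB: "y \<in> W ` I" using y JJ by simp
    have "eventually (\<lambda>z. z \<in> V ` I) (nhds y)" using eventually_nhds_in_open[OF A.J_open y] .
    then have "eventually (\<lambda>z. A.fY z = B.fY z) (nhds y)" by (rule eventually_mono) (use FY in simp)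
    then have dd: "deriv A.fY y = deriv B.fY y" by (rule deriv_cong_ev) simp
    have xb: "A.G y \<in> {0<..<1}" using A.G_range y by blast
    have e1: "A.fY y * A.sigY y = B.fY y * B.sigY y"
      using A.sig_bar_G[OF y] B.sig_bar_G[OF yB] GG[OF y] bars xb by simp
    then show "A.sigY y = B.sigY y" using FY[OF y] A.fY_nz[OF y] by simp
    have "A.fY y * A.muY y + 1/2 * (A.sigY y)^2 * deriv A.fY y = B.fY y * B.muY y + 1/2 * (B.sigY y)^2 * deriv B.fY y"
      using A.mu_bar_G[OF y] B.mu_bar_G[OF yB] GG[OF y] bars xb by simp
    then show "A.muY y = B.muY y" using FY[OF y] A.fY_nz[OF y] dd \<open>A.sigY y = B.sigY y\<close> by simp
  qed
  then show ?thesis using W_adm by blast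
qed

theorem corollary6:
  fixes Theta :: "'p set" and I :: "real set" and xs :: real
    and mu sig :: "real \<Rightarrow> 'p \<Rightarrow> real" and theta :: 'p and V :: "real \<Rightarrow> real"
  assumes I_interval: "is_interval I" and I_open: "open I" and I_ne: "I \<noteq> {}"
    and xs_in: "xs \<in> I"
    and theta_in: "theta \<in> Theta"
    and a_mu: "\<And>th. th \<in> Theta \<Longrightarrow> C2_on I (\<lambda>x. mu x th)"
    and a_sig: "\<And>th. th \<in> Theta \<Longrightarrow> C2_on I (\<lambda>x. (sig x th)\<^sup>2)"
    and a_pos: "\<And>th x. th \<in> Theta \<Longrightarrow> x \<in> I \<Longrightarrow> (sig x th)\<^sup>2 > 0"
    and b_left: "\<And>th. th \<in> Theta \<Longrightarrow>
                   filterlim (scale_meas xs mu sig th) at_bot (left_end I)"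
    and b_right: "\<And>th. th \<in> Theta \<Longrightarrow>
                   filterlim (scale_meas xs mu sig th) at_top (right_end I)"
    and c_int: "\<And>th. th \<in> Theta \<Longrightarrow>
                   (\<lambda>x. 1 / ((sig x th)\<^sup>2 * scale_dens xs mu sig th x)) integrable_on I"
    and d_V: "admissible_V I V"
  shows "identified Theta I mu sig (theta, V) \<longleftrightarrow>
         (\<forall>th' \<in> Theta.
            ((\<forall>xb \<in> {0<..<1}. mu_bar I xs mu sig theta xb = mu_bar I xs mu sig th' xb
                               \<and> sig_bar I xs mu sig theta xb = sig_bar I xs mu sig th' xb)
             \<longleftrightarrow> theta = th'))"
proof -
  have loc: "onep I xs mu sig t" if t: "t \<in> Theta" for t
    by (unfold_locales) (use assms t in auto)
  have locV: "onepV I xs mu sig t W" if t: "t \<in> Theta" and W: "admissible_V I W" for t W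
    using loc[OF t] W by (simp add: onepV_def onepV_axioms_def)
  show ?thesis
  proof
    assume idf: "identified Theta I mu sig (theta, V)"
    show "\<forall>th' \<in> Theta.
            ((\<forall>xb \<in> {0<..<1}. mu_bar I xs mu sig theta xb = mu_bar I xs mu sig th' xb
                               \<and> sig_bar I xs mu sig theta xb = sig_bar I xs mu sig th' xb)
             \<longleftrightarrow> theta = th')"
    proof (rule ballI, rule iffI)
      fix th' assume th': "th' \<in> Theta"
      assume bars: "\<forall>xb \<in> {0<..<1}. mu_bar I xs mu sig theta xb = mu_bar I xs mu sig th' xb
                               \<and> sig_bar I xs mu sig theta xb = sig_bar I xs mu sig th' xb"
      obtain W where W: "admissible_V I W" "obs_equiv I mu sig (theta, V) (th', W)"
        using obs_from_bars[OF loc[OF theta_in] loc[OF th'] d_V bars] by blast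
      have "admissible Theta I (th', W)" using th' W(1) by (simp add: admissible_def)
      then have "struct_eq I (theta, V) (th', W)" using idf W(2) unfolding identified_def by blast
      then show "theta = th'" by (simp add: struct_eq_def)
    next
      fix th' assume "th' \<in> Theta" "theta = th'"
      then show "\<forall>xb \<in> {0<..<1}. mu_bar I xs mu sig theta xb = mu_bar I xs mu sig th' xb
                               \<and> sig_bar I xs mu sig theta xb = sig_bar I xs mu sig th' xb" by simp
    qed
  next
    assume inj: "\<forall>th' \<in> Theta.
            ((\<forall>xb \<in> {0<..<1}. mu_bar I xs mu sig theta xb = mu_bar I xs mu sig th' xb
                               \<and> sig_bar I xs mu sig theta xb = sig_bar I xs mu sig th' xb)
             \<longleftrightarrow> theta = th')"
    show "identified Theta I mu sig (theta, V)"
      unfolding identified_def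
    proof (intro allI impI, elim conjE)
      fix S' assume adm: "admissible Theta I S'" and oe: "obs_equiv I mu sig (theta, V) S'"
      obtain th' W where S': "S' = (th', W)" by (cases S') auto
      have th': "th' \<in> Theta" and W: "admissible_V I W" using adm S' by (auto simp: admissible_def)
      have oe': "obs_equiv I mu sig (theta, V) (th', W)" using oe S' by simp
      have "theta = th'"
        using bars_from_obs[OF locV[OF theta_in d_V] locV[OF th' W] oe'] inj th' by blast
      moreover have "\<forall>x\<in>I. V x = W x"
        using V_eq_from_obs[OF locV[OF theta_in d_V], of W] locV[OF th' W] oe' \<open>theta = th'\<close> by blast
      ultimately show "struct_eq I (theta, V) S'" using S' by (simp add: struct_eq_def)
    qed
  qed
qed


end
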